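(* For every integer $T=3k+1$ with $k\ge 2$ and every $\sigma\in\mathfrak S_3$, the vector $\sigma c$ with $c=[2,-1,-1,-1,2,2]$ defines a facet of $P^T$.
   Context: For an integer $T\ge 2$, let $\Omega_T$ be the set of words $w=s_1s_2\cdots s_T$ over $\{1,2,3\}$ with $s_l\neq s_{l+1}$ for $l=1,\dots,T-1$. For $w\in\Omega_T$ and an ordered pair $ij$, $i\neq j$, let $x_{ij}(w)$ be the number of indices $1\le l\le T-1$ with $s_ls_{l+1}=ij$. Vectors of $\mathbb R^6$ are indexed in the order $[x_{12},x_{13},x_{21},x_{23},x_{31},x_{32}]$. Let $a_w=[x_{12}(w),\dots,x_{32}(w)]$ and $P^T=\mathrm{conv}\{a_w:w\in\Omega_T\}$. $\mathfrak S_3$ acts on $\mathbb R^6$ by $(\sigma c)_{ij}=c_{\sigma(i)\sigma(j)}$. A vector $c$ defines a facet of $P^T$ if $c\cdot a_w\ge0$ for all $w\in\Omega_T$ and $\{x\in P^T: c\cdot x=0\}$ is a facet of $P^T$. *)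

theory Defs
  imports "HOL-Analysis.Analysis"
begin

text \<open>Words of length T over {1,2,3} with no two consecutive letters equal
  (positions are 0-based: the list index l corresponds to s_(l+1)).\<close>
definition Omega :: "nat \<Rightarrow> nat list set" where
  "Omega T = {w. length w = T \<and> set w \<subseteq> {1,2,3} \<and>
                 (\<forall>l. l + 1 < T \<longrightarrow> w ! l \<noteq> w ! (l + 1))}"

definition xcount :: "nat \<Rightarrow> nat \<Rightarrow> nat list \<Rightarrow> nat" where
  "xcount i j w = card {l. l + 1 < length w \<and> w ! l = i \<and> w ! (l + 1) = j}"

definition pair_vec :: "(nat \<Rightarrow> nat \<Rightarrow> real) \<Rightarrow> real^6" where
  "pair_vec f = vector [f 1 2, f 1 3, f 2 1, f 2 3, f 3 1, f 3 2]"

definition coord :: "real^6 \<Rightarrow> nat \<Rightarrow> nat \<Rightarrow> real" where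
  "coord v i j =
     (if (i, j) = (1, 2) then v $ 1 else
      if (i, j) = (1, 3) then v $ 2 else
      if (i, j) = (2, 1) then v $ 3 else
      if (i, j) = (2, 3) then v $ 4 else
      if (i, j) = (3, 1) then v $ 5 else
      if (i, j) = (3, 2) then v $ 6 else 0)"

definition perm_act :: "(nat \<Rightarrow> nat) \<Rightarrow> real^6 \<Rightarrow> real^6" where
  "perm_act \<sigma> c = pair_vec (\<lambda>i j. coord c (\<sigma> i) (\<sigma> j))"

definition avec :: "nat list \<Rightarrow> real^6" where
  "avec w = pair_vec (\<lambda>i j. real (xcount i j w))"

definition PT :: "nat \<Rightarrow> (real^6) set" where
  "PT T = convex hull (avec ` Omega T)"

definition defines_facet :: "real^6 \<Rightarrow> nat \<Rightarrow> bool" where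
  "defines_facet c T \<longleftrightarrow>
     (\<forall>w \<in> Omega T. c \<bullet> avec w \<ge> 0) \<and>
     ({x \<in> PT T. c \<bullet> x = 0} facet_of PT T)"

end

theory Submission
  imports Defs
begin

lemma exhaust_6:
  fixes x :: 6
  shows "x = 1 \<or> x = 2 \<or> x = 3 \<or> x = 4 \<or> x = 5 \<or> x = 6"
proof (induct x)
  case (of_int z)
  then have "0 \<le> z \<and> z < 6" by simp
  then have "z = 0 \<or> z = 1 \<or> z = 2 \<or> z = 3 \<or> z = 4 \<or> z = 5" by presburger
  then show ?case by (elim disjE; simp)
qed
lemma UNIV_6: "UNIV = {1, 2, 3, 4, 5, 6::6}"
  using exhaust_6 by blast
lemma forall_6: "(\<forall>i::6. P i) \<longleftrightarrow> P 1 \<and> P 2 \<and> P 3 \<and> P 4 \<and> P 5 \<and> P 6"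
  by (metis exhaust_6)
lemma vector_6 [simp]:
 "(vector [x1,x2,x3,x4,x5,x6] ::('a::zero)^6)$1 = x1"
 "(vector [x1,x2,x3,x4,x5,x6] ::('a::zero)^6)$2 = x2"
 "(vector [x1,x2,x3,x4,x5,x6] ::('a::zero)^6)$3 = x3"
 "(vector [x1,x2,x3,x4,x5,x6] ::('a::zero)^6)$4 = x4"
 "(vector [x1,x2,x3,x4,x5,x6] ::('a::zero)^6)$5 = x5"
 "(vector [x1,x2,x3,x4,x5,x6] ::('a::zero)^6)$6 = x6"
  unfolding vector_def by simp_all
lemma vec6_eq_iff: "(x::real^6) = y \<longleftrightarrow> x$1 = y$1 \<and> x$2 = y$2 \<and> x$3 = y$3 \<and> x$4 = y$4 \<and> x$5 = y$5 \<and> x$6 = y$6"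
  unfolding vec_eq_iff forall_6 ..
lemma inner6: "(x::real^6) \<bullet> y = x$1*y$1 + x$2*y$2 + x$3*y$3 + x$4*y$4 + x$5*y$5 + x$6*y$6"
  unfolding inner_vec_def UNIV_6 by simp
lemma pair_vec_nth [simp]:
  "pair_vec f $ 1 = f 1 2" "pair_vec f $ 2 = f 1 3" "pair_vec f $ 3 = f 2 1"
  "pair_vec f $ 4 = f 2 3" "pair_vec f $ 5 = f 3 1" "pair_vec f $ 6 = f 3 2"
  unfolding pair_vec_def by simp_all

lemma coord_pair_vec:
  assumes "a \<in> {1,2,3}" "b \<in> {1,2,3}" "a \<noteq> b"
  shows "coord (pair_vec f) a b = f a b"
  using assms by (auto simp: coord_def)

fun S :: "(nat \<Rightarrow> nat \<Rightarrow> real) \<Rightarrow> nat list \<Rightarrow> real" where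
  "S f (a # b # w) = f a b + S f (b # w)"
| "S f _ = 0"

definition E :: "nat \<Rightarrow> nat \<Rightarrow> real^6" where
  "E a b = pair_vec (\<lambda>i j. if a = i \<and> b = j then 1 else 0)"

lemma xcount_Nil [simp]: "xcount i j [] = 0"
  by (simp add: xcount_def)

lemma xcount_single [simp]: "xcount i j [a] = 0"
  by (simp add: xcount_def)

lemma xcount_Cons_Cons:
  "xcount i j (a # b # w) = (if a = i \<and> b = j then 1 else 0) + xcount i j (b # w)"
proof -
  define A where "A = {l. l + 1 < length (b # w) \<and> (b # w) ! l = i \<and> (b # w) ! (l + 1) = j}"
  have eq: "{l. l + 1 < length (a # b # w) \<and> (a # b # w) ! l = i \<and> (a # b # w) ! (l + 1) = j}
        = (if a = i \<and> b = j then {0} else {}) \<union> Suc ` A" (is "?L = ?R")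
  proof (rule set_eqI)
    fix l show "l \<in> ?L \<longleftrightarrow> l \<in> ?R"
      by (cases l) (auto simp: A_def)
  qed
  have fin: "finite A" unfolding A_def by (rule finite_subset[of _ "{..<length (b#w)}"]) auto
  have "card ?R = (if a = i \<and> b = j then 1 else 0) + card A"
    using fin by (auto simp: card_image)
  then show ?thesis unfolding xcount_def eq A_def by simp
qed

lemma avec_Nil [simp]: "avec [] = 0"
  by (simp add: avec_def vec6_eq_iff)

lemma avec_single [simp]: "avec [a] = 0"
  by (simp add: avec_def vec6_eq_iff)

lemma avec_Cons_Cons: "avec (a # b # w) = E a b + avec (b # w)"
  by (simp add: avec_def E_def vec6_eq_iff xcount_Cons_Cons)

lemma avec_Cons: "xs \<noteq> [] \<Longrightarrow> avec (a # xs) = E a (hd xs) + avec xs"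
  by (cases xs) (auto simp: avec_Cons_Cons)

definition ok :: "nat list \<Rightarrow> bool" where
  "ok w \<longleftrightarrow> set w \<subseteq> {1,2,3} \<and> distinct_adj w"

lemma Omega_iff: "w \<in> Omega T \<longleftrightarrow> length w = T \<and> ok w"
  unfolding Omega_def ok_def distinct_adj_conv_nth by auto

lemma ok_Cons_Cons: "ok (a # b # w) \<longleftrightarrow> a \<in> {1,2,3} \<and> b \<in> {1,2,3} \<and> a \<noteq> b \<and> ok (b # w)"
  unfolding ok_def by auto

lemma inner_E:
  assumes "a \<in> {1,2,3}" "b \<in> {1,2,3}" "a \<noteq> b"
  shows "v \<bullet> E a b = coord v a b"
  using assms by (auto simp: inner6 E_def coord_def)

lemma avec_inner: "ok w \<Longrightarrow> v \<bullet> avec w = S (coord v) w"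
proof (induction w rule: induct_list012)
  case (3 a b w)
  then show ?case by (simp add: avec_Cons_Cons ok_Cons_Cons inner_add_right inner_E)
qed simp_all


lemma coord_perm:
  assumes "\<sigma> permutes {1,2,3}" "a \<in> {1,2,3}" "b \<in> {1,2,3}" "a \<noteq> b"
  shows "coord (perm_act \<sigma> c) a b = coord c (\<sigma> a) (\<sigma> b)"
  unfolding perm_act_def using assms by (simp add: coord_pair_vec)

lemma perm_in: "(\<sigma>::nat\<Rightarrow>nat) permutes {1,2,3} \<Longrightarrow> a \<in> {1,2,3} \<Longrightarrow> \<sigma> a \<in> {1,2,3}"
  using permutes_in_image by metis

lemma perm_neq: "\<sigma> permutes {1,2,3} \<Longrightarrow> a \<noteq> b \<Longrightarrow> \<sigma> a \<noteq> \<sigma> b"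
  by (metis permutes_inverses(2))

lemma ok_map: assumes "\<sigma> permutes {1,2,3}" "ok w" shows "ok (map \<sigma> w)"
proof -
  have "inj_on \<sigma> (set w)" using permutes_inj[OF assms(1)] by (auto intro: inj_on_subset)
  moreover have "set (map \<sigma> w) \<subseteq> {1,2,3}"
  proof
    fix x assume "x \<in> set (map \<sigma> w)"
    then obtain y where y: "y \<in> set w" "x = \<sigma> y" by auto
    then have "y \<in> {1,2,3}" using assms(2) unfolding ok_def by blast
    then show "x \<in> {1,2,3}" using perm_in[OF assms(1)] y(2) by blast
  qed
  ultimately show ?thesis using assms unfolding ok_def
    by (auto intro!: distinct_adj_mapI)
qed

lemma S_perm:
  assumes "\<sigma> permutes {1,2,3}"
  shows "ok w \<Longrightarrow> S (coord (perm_act \<sigma> c)) w = S (coord c) (map \<sigma> w)"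
proof (induction w rule: induct_list012)
  case (3 a b w)
  then show ?case using assms by (simp add: ok_Cons_Cons coord_perm)
qed simp_all

definition c0 :: "real^6" where "c0 = vector [2, -1, -1, -1, 2, 2]"

definition phi :: "nat \<Rightarrow> real" where
  "phi x = (if x = 1 then 1 else if x = 2 then 2 else 0)"

lemma S_c0_ge: "ok w \<Longrightarrow> w \<noteq> [] \<Longrightarrow> S (coord c0) w \<ge> phi (last w) - phi (hd w)"
proof (induction w rule: induct_list012)
  case (3 a b w)
  then have ab: "a \<in> {1,2,3}" "b \<in> {1,2,3}" "a \<noteq> b" and okb: "ok (b # w)"
    by (auto simp: ok_Cons_Cons)
  have "coord c0 a b \<ge> phi b - phi a"
    using ab by (auto simp: coord_def c0_def phi_def)
  with 3(2)[OF okb] show ?case by simp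
qed (simp_all add: phi_def)

lemma S_c0_mod: "ok w \<Longrightarrow> \<exists>n::nat. S (coord c0) w = 3 * real n - real (length w - 1)"
proof (induction w rule: induct_list012)
  case (3 a b w)
  then have ab: "a \<in> {1,2,3}" "b \<in> {1,2,3}" "a \<noteq> b" and okb: "ok (b # w)"
    by (auto simp: ok_Cons_Cons)
  obtain n where n: "S (coord c0) (b # w) = 3 * real n - real (length (b # w) - 1)"
    using 3(2)[OF okb] by blast
  have "coord c0 a b = 2 \<or> coord c0 a b = -1"
    using ab by (auto simp: coord_def c0_def)
  then show ?case
  proof
    assume "coord c0 a b = 2"
    then have "S (coord c0) (a # b # w) = 3 * real (Suc n) - real (length (a # b # w) - 1)"
      using n by simp
    then show ?thesis by blast
  next
    assume "coord c0 a b = -1"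
    then have "S (coord c0) (a # b # w) = 3 * real n - real (length (a # b # w) - 1)"
      using n by simp
    then show ?thesis by blast
  qed
qed simp_all

lemma S_c0_nonneg:
  assumes "ok w" "length w = 3 * k + 1"
  shows "S (coord c0) w \<ge> 0"
proof -
  have ne: "w \<noteq> []" using assms by auto
  obtain n :: nat where n: "S (coord c0) w = 3 * real n - real (length w - 1)"
    using S_c0_mod[OF assms(1)] by blast
  have "phi (last w) - phi (hd w) \<ge> -2" by (simp add: phi_def)
  with S_c0_ge[OF assms(1) ne] n assms(2) have "3 * real n - 3 * real k \<ge> -2" by simp
  then have "real k < real (n + 1)" by simp
  then have "k < n + 1" by (simp only: of_nat_less_iff)
  then have "k \<le> n" by simp
  then show ?thesis using n assms(2) by simp
qed


definition rep :: "nat \<Rightarrow> nat list" where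
  "rep m = concat (replicate m [1,3,2])"

lemma rep_0 [simp]: "rep 0 = []" and rep_Suc [simp]: "rep (Suc m) = [1,3,2] @ rep m"
  by (simp_all add: rep_def)

lemma length_rep [simp]: "length (rep m) = 3 * m"
  by (induction m) auto

lemma set_rep: "set (rep m) \<subseteq> {1,2,3}"
  by (induction m) auto

lemma hd_rep: "hd (rep m @ 1 # q) = 1"
  by (cases m) auto

lemma ok_rep: "ok (1 # q) \<Longrightarrow> ok (rep m @ 1 # q)"
proof (induction m)
  case (Suc m)
  then have "ok (rep m @ 1 # q)" by simp
  then show ?case using hd_rep[of m q] by (auto simp: ok_def distinct_adj_Cons)
qed simp

definition B0 :: "real^6" where "B0 = vector [0, 1, 1, 0, 0, 1]"

lemma avec_rep: "avec (rep m @ 1 # q) = real m *\<^sub>R B0 + avec (1 # q)"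
proof (induction m)
  case (Suc m)
  have "avec (rep (Suc m) @ 1 # q) = E 1 3 + E 3 2 + E 2 1 + avec (rep m @ 1 # q)"
    using hd_rep[of m q] by (simp add: avec_Cons_Cons avec_Cons)
  also have "E 1 3 + E 3 2 + E 2 1 = B0" by (simp add: E_def B0_def vec6_eq_iff)
  finally show ?case using Suc by (simp add: algebra_simps)
qed simp

definition w0 :: "nat \<Rightarrow> nat list" where "w0 m = rep m @ [1,3,2,1]"
definition w1 :: "nat \<Rightarrow> nat list" where "w1 m = rep m @ [1,3,2,3]"
definition w2 :: "nat \<Rightarrow> nat list" where "w2 m = rep m @ [1,2,1,3]"
definition w3 :: "nat \<Rightarrow> nat list" where "w3 m = rep m @ [1,3,1,3]"
definition w4 :: "nat \<Rightarrow> nat list" where "w4 m = 2 # rep m @ [1,3,1]"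
definition wn :: "nat \<Rightarrow> nat list" where "wn m = 3 # rep m @ [1,3,2]"

lemma words_Omega:
  "w0 m \<in> Omega (3 * m + 4)" "w1 m \<in> Omega (3 * m + 4)" "w2 m \<in> Omega (3 * m + 4)"
  "w3 m \<in> Omega (3 * m + 4)" "w4 m \<in> Omega (3 * m + 4)" "wn m \<in> Omega (3 * m + 4)"
proof -
  have a: "ok (rep m @ 1 # q)" if "ok (1 # q)" for q using ok_rep that by blast
  show "w0 m \<in> Omega (3 * m + 4)" unfolding Omega_iff w0_def using a[of "[3,2,1]"] by (simp add: ok_def)
  show "w1 m \<in> Omega (3 * m + 4)" unfolding Omega_iff w1_def using a[of "[3,2,3]"] by (simp add: ok_def)
  show "w2 m \<in> Omega (3 * m + 4)" unfolding Omega_iff w2_def using a[of "[2,1,3]"] by (simp add: ok_def)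
  show "w3 m \<in> Omega (3 * m + 4)" unfolding Omega_iff w3_def using a[of "[3,1,3]"] by (simp add: ok_def)
  show "w4 m \<in> Omega (3 * m + 4)" unfolding Omega_iff w4_def using a[of "[3,1]"] hd_rep[of m "[3,1]"] set_rep[of m]
    by (auto simp: ok_def distinct_adj_Cons)
  show "wn m \<in> Omega (3 * m + 4)" unfolding Omega_iff wn_def using a[of "[3,2]"] hd_rep[of m "[3,2]"] set_rep[of m]
    by (auto simp: ok_def distinct_adj_Cons)
qed

lemma avec_2rep: "avec (2 # rep m @ 1 # q) = E 2 1 + real m *\<^sub>R B0 + avec (1 # q)"
  using avec_Cons[of "rep m @ 1 # q" 2] hd_rep[of m q] avec_rep[of m q] by (simp add: algebra_simps)

lemma avec_3rep: "avec (3 # rep m @ 1 # q) = E 3 1 + real m *\<^sub>R B0 + avec (1 # q)"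
  using avec_Cons[of "rep m @ 1 # q" 3] hd_rep[of m q] avec_rep[of m q] by (simp add: algebra_simps)

lemma words_avec:
  "avec (w0 m) = vector [0, real m + 1, real m + 1, 0, 0, real m + 1]"
  "avec (w1 m) = vector [0, real m + 1, real m, 1, 0, real m + 1]"
  "avec (w2 m) = vector [1, real m + 1, real m + 1, 0, 0, real m]"
  "avec (w3 m) = vector [0, real m + 2, real m, 0, 1, real m]"
  "avec (w4 m) = vector [0, real m + 1, real m + 1, 0, 1, real m]"
  "avec (wn m) = vector [0, real m + 1, real m, 0, 1, real m + 1]"
proof -
  have "avec (w0 m) = real m *\<^sub>R B0 + avec [1,3,2,1]" unfolding w0_def by (rule avec_rep)
  then show "avec (w0 m) = vector [0, real m + 1, real m + 1, 0, 0, real m + 1]"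
    by (simp add: avec_Cons_Cons E_def B0_def vec6_eq_iff)
  have "avec (w1 m) = real m *\<^sub>R B0 + avec [1,3,2,3]" unfolding w1_def by (rule avec_rep)
  then show "avec (w1 m) = vector [0, real m + 1, real m, 1, 0, real m + 1]"
    by (simp add: avec_Cons_Cons E_def B0_def vec6_eq_iff)
  have "avec (w2 m) = real m *\<^sub>R B0 + avec [1,2,1,3]" unfolding w2_def by (rule avec_rep)
  then show "avec (w2 m) = vector [1, real m + 1, real m + 1, 0, 0, real m]"
    by (simp add: avec_Cons_Cons E_def B0_def vec6_eq_iff)
  have "avec (w3 m) = real m *\<^sub>R B0 + avec [1,3,1,3]" unfolding w3_def by (rule avec_rep)
  then show "avec (w3 m) = vector [0, real m + 2, real m, 0, 1, real m]"
    by (simp add: avec_Cons_Cons E_def B0_def vec6_eq_iff)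
  have "avec (w4 m) = E 2 1 + real m *\<^sub>R B0 + avec [1,3,1]" unfolding w4_def by (rule avec_2rep)
  then show "avec (w4 m) = vector [0, real m + 1, real m + 1, 0, 1, real m]"
    by (simp add: avec_Cons_Cons E_def B0_def vec6_eq_iff)
  have "avec (wn m) = E 3 1 + real m *\<^sub>R B0 + avec [1,3,2]" unfolding wn_def by (rule avec_3rep)
  then show "avec (wn m) = vector [0, real m + 1, real m, 0, 1, real m + 1]"
    by (simp add: avec_Cons_Cons E_def B0_def vec6_eq_iff)
qed


lemma coord_avec: "a \<in> {1,2,3} \<Longrightarrow> b \<in> {1,2,3} \<Longrightarrow> a \<noteq> b \<Longrightarrow> coord (avec w) a b = real (xcount a b w)"
  unfolding avec_def by (rule coord_pair_vec)

lemma inv_perm_eq: "\<sigma> permutes A \<Longrightarrow> inv \<sigma> x = i \<longleftrightarrow> x = \<sigma> i"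
  by (metis permutes_inverses)

lemma avec_map:
  assumes "\<sigma> permutes {1,2,3}"
  shows "avec (map (inv \<sigma>) w) = perm_act \<sigma> (avec w)"
proof -
  have x: "xcount i j (map (inv \<sigma>) w) = xcount (\<sigma> i) (\<sigma> j) w" for i j
    unfolding xcount_def
    by (rule arg_cong[where f=card]) (auto simp: inv_perm_eq[OF assms] permutes_inverses[OF assms])
  have c: "coord (avec w) (\<sigma> i) (\<sigma> j) = real (xcount (\<sigma> i) (\<sigma> j) w)"
    if "i \<in> {1,2,3}" "j \<in> {1,2,3}" "i \<noteq> j" for i j
    using coord_avec perm_in[OF assms] perm_neq[OF assms] that by metis
  show ?thesis
    unfolding perm_act_def vec6_eq_iff pair_vec_nth
    by (simp add: c) (simp add: avec_def x)
qed

lemma coord_add: "coord (x + y) a b = coord x a b + coord y a b"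
  by (simp add: coord_def)

lemma coord_scale: "coord (r *\<^sub>R x) a b = r * coord x a b"
  by (simp add: coord_def)

lemma linear_perm_act: "linear (perm_act \<sigma>)"
  by (rule linearI) (simp_all add: perm_act_def vec6_eq_iff coord_add coord_scale)

lemma inj_perm_act:
  assumes "\<sigma> permutes {1,2,3}"
  shows "inj (perm_act \<sigma>)"
proof (rule injI)
  fix x y assume h: "perm_act \<sigma> x = perm_act \<sigma> y"
  have inv: "inv \<sigma> permutes {1,2,3}" using assms by (rule permutes_inv)
  have cc: "coord x a b = coord y a b" if "a \<in> {1,2,3}" "b \<in> {1,2,3}" "a \<noteq> b" for a b
  proof -
    have i: "inv \<sigma> a \<in> {1,2,3}" "inv \<sigma> b \<in> {1,2,3}" "inv \<sigma> a \<noteq> inv \<sigma> b"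
      using perm_in[OF inv] perm_neq[OF inv] that by auto
    have e: "\<sigma> (inv \<sigma> a) = a" "\<sigma> (inv \<sigma> b) = b" using permutes_inverses(1)[OF assms] by auto
    have "coord x a b = coord (perm_act \<sigma> x) (inv \<sigma> a) (inv \<sigma> b)"
      using coord_perm[OF assms i] e by simp
    also have "\<dots> = coord (perm_act \<sigma> y) (inv \<sigma> a) (inv \<sigma> b)" using h by simp
    also have "\<dots> = coord y a b" using coord_perm[OF assms i] e by simp
    finally show ?thesis .
  qed
  show "x = y"
    using cc[of 1 2] cc[of 1 3] cc[of 2 1] cc[of 2 3] cc[of 3 1] cc[of 3 2]
    by (simp add: vec6_eq_iff coord_def)
qed

lemma notin_span_coord:
  fixes S :: "(real^6) set"
  assumes "\<forall>x\<in>S. x $ i = 0" "a $ i \<noteq> 0"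
  shows "a \<notin> span S"
proof -
  have sub: "subspace {x::real^6. x $ i = 0}" by (auto simp: subspace_def)
  have "span S \<subseteq> {x. x $ i = 0}" using assms(1) by (intro span_minimal[OF _ sub]) auto
  then show ?thesis using assms(2) by auto
qed

lemma indep_step:
  fixes S :: "(real^6) set"
  assumes "independent S" "finite S" "a \<notin> span S"
  shows "independent (insert a S) \<and> card (insert a S) = Suc (card S)"
proof -
  have "a \<notin> S" using assms(3) span_base by blast
  then show ?thesis using assms by (simp add: independent_insert)
qed

lemma aff_dim_ge4:
  fixes p0 p1 p2 p3 p4 :: "real^6"
  defines "d1 \<equiv> p1 - p0" and "d2 \<equiv> p2 - p0" and "d3 \<equiv> p3 - p0" and "d4 \<equiv> p4 - p0"
  assumes "d1 $ ia \<noteq> 0"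
    and "d1 $ ib = 0" "d2 $ ib \<noteq> 0"
    and "d1 $ ic = 0" "d2 $ ic = 0" "d3 $ ic \<noteq> 0"
    and "d1 $ idd = 0" "d2 $ idd = 0" "d3 $ idd = 0" "d4 $ idd \<noteq> 0"
  shows "aff_dim {p0, p1, p2, p3, p4} \<ge> 4"
proof -
  have s1: "independent {d1} \<and> card {d1} = Suc 0"
    using indep_step[of "{}" d1] assms(5) by auto
  have s2: "independent {d2, d1} \<and> card {d2, d1} = Suc (Suc 0)"
    using indep_step[of "{d1}" d2] s1 notin_span_coord[of "{d1}" ib d2] assms by auto
  have s3: "independent {d3, d2, d1} \<and> card {d3, d2, d1} = Suc (Suc (Suc 0))"
    using indep_step[of "{d2, d1}" d3] s2 notin_span_coord[of "{d2, d1}" ic d3] assms by auto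
  have s4: "independent {d4, d3, d2, d1} \<and> card {d4, d3, d2, d1} = 4"
    using indep_step[of "{d3, d2, d1}" d4] s3 notin_span_coord[of "{d3, d2, d1}" idd d4] assms by auto
  let ?B = "{p0, p1, p2, p3, p4}"
  have "p0 \<in> affine hull ?B" by (simp add: hull_inc)
  then have ad: "aff_dim ?B = int (dim ((+) (- p0) ` ?B))" by (rule aff_dim_eq_dim)
  have "{d4, d3, d2, d1} \<subseteq> (+) (- p0) ` ?B"
    unfolding d1_def d2_def d3_def d4_def by (auto simp: image_iff algebra_simps)
  then have "card {d4, d3, d2, d1} \<le> dim ((+) (- p0) ` ?B)"
    using s4 by (intro independent_card_le_dim) auto
  then show ?thesis using s4 ad by simp
qed

lemma S_one: "ok w \<Longrightarrow> w \<noteq> [] \<Longrightarrow> S (coord (vector [1,1,1,1,1,1])) w = real (length w) - 1"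
proof (induction w rule: induct_list012)
  case (3 a b w)
  then have ab: "a \<in> {1,2,3}" "b \<in> {1,2,3}" "a \<noteq> b" and okb: "ok (b # w)"
    by (auto simp: ok_Cons_Cons)
  have "coord (vector [1,1,1,1,1,1]) a b = 1" using ab by (auto simp: coord_def)
  then show ?case using 3(2)[OF okb] by simp
qed simp_all


lemma inner_perm_map:
  assumes "\<sigma> permutes {1,2,3}" "ok w"
  shows "perm_act \<sigma> c \<bullet> avec (map (inv \<sigma>) w) = c \<bullet> avec w"
proof -
  have okm: "ok (map (inv \<sigma>) w)" using ok_map[OF permutes_inv[OF assms(1)] assms(2)] .
  have mm: "map \<sigma> (map (inv \<sigma>) w) = w" by (simp add: permutes_inverses(1)[OF assms(1)] map_idI)
  show ?thesis
    using avec_inner[OF okm] S_perm[OF assms(1) okm] mm avec_inner[OF assms(2)] by simp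
qed

theorem proposition8:
  fixes k :: nat and \<sigma> :: "nat \<Rightarrow> nat"
  assumes "k \<ge> 2" and "\<sigma> permutes {1, 2, 3}"
  shows "defines_facet (perm_act \<sigma> (vector [2, -1, -1, -1, 2, 2])) (3 * k + 1)"
proof -
  define T where "T = 3 * k + 1"
  define m where "m = k - 1"
  have Tm: "T = 3 * m + 4" using assms(1) unfolding T_def m_def by simp
  define c where "c = perm_act \<sigma> c0"
  define \<tau> where "\<tau> = inv \<sigma>"
  have tau: "\<tau> permutes {1,2,3}" unfolding \<tau>_def using assms(2) by (rule permutes_inv)
  define P where "P = PT T"
  have Pdef: "P = convex hull (avec ` Omega T)" unfolding P_def PT_def ..
  have valid: "c \<bullet> avec w \<ge> 0" if "w \<in> Omega T" for w
  proof -
    have ok: "ok w" and len: "length w = 3 * k + 1" using that unfolding Omega_iff T_def by auto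
    have "c \<bullet> avec w = S (coord c0) (map \<sigma> w)"
      unfolding c_def using avec_inner[OF ok] S_perm[OF assms(2) ok] by simp
    also have "\<dots> \<ge> 0" using S_c0_nonneg[OF ok_map[OF assms(2) ok]] len by simp
    finally show ?thesis .
  qed
  have Psub: "P \<subseteq> {x. c \<bullet> x \<ge> 0}"
    unfolding Pdef using valid by (intro hull_minimal) (auto simp: convex_halfspace_ge)
  have cvx: "convex P" unfolding Pdef by simp
  define F where "F = P \<inter> {x. c \<bullet> x = 0}"
  have face: "F face_of P"
    unfolding F_def using Psub by (intro face_of_Int_supporting_hyperplane_ge[OF cvx]) auto
  have inP: "avec (map \<tau> w) \<in> P" if "w \<in> Omega T" for w
  proof -
    have "map \<tau> w \<in> Omega T" using that ok_map[OF tau] by (auto simp: Omega_iff)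
    then show ?thesis unfolding Pdef by (intro hull_inc) auto
  qed
  have cval: "c \<bullet> avec (map \<tau> w) = c0 \<bullet> avec w" if "w \<in> Omega T" for w
    unfolding c_def \<tau>_def using inner_perm_map[OF assms(2)] that by (auto simp: Omega_iff)
  have WO: "w0 m \<in> Omega T" "w1 m \<in> Omega T" "w2 m \<in> Omega T" "w3 m \<in> Omega T"
      "w4 m \<in> Omega T" "wn m \<in> Omega T" unfolding Tm by (rule words_Omega)+
  have c0v: "c0 \<bullet> avec (w0 m) = 0" "c0 \<bullet> avec (w1 m) = 0" "c0 \<bullet> avec (w2 m) = 0"
     "c0 \<bullet> avec (w3 m) = 0" "c0 \<bullet> avec (w4 m) = 0" "c0 \<bullet> avec (wn m) = 3"
    by (simp_all add: words_avec c0_def inner6 algebra_simps)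
  have FneP: "F \<noteq> P"
  proof
    assume "F = P"
    then have "avec (map \<tau> (wn m)) \<in> F" using inP[OF WO(6)] by simp
    then show False using cval[OF WO(6)] c0v(6) unfolding F_def by simp
  qed
  define one :: "real^6" where "one = vector [1,1,1,1,1,1]"
  have onev: "one \<bullet> avec w = real T - 1" if "w \<in> Omega T" for w
  proof -
    have ok: "ok w" and len: "length w = T" using that unfolding Omega_iff by auto
    have ne: "w \<noteq> []" using len Tm by auto
    show ?thesis using avec_inner[OF ok] S_one[OF ok ne] len unfolding one_def by simp
  qed
  have "P \<subseteq> {x. one \<bullet> x = real T - 1}"
    unfolding Pdef using onev by (intro hull_minimal) (auto simp: convex_hyperplane)
  moreover have "one \<noteq> 0" unfolding one_def by (simp add: vec6_eq_iff)
  ultimately have affP: "aff_dim P \<le> 5"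
    using aff_dim_subset[of P "{x. one \<bullet> x = real T - 1}"] by simp
  define Bs where "Bs = {avec (w0 m), avec (w4 m), avec (w1 m), avec (w2 m), avec (w3 m)}"
  have "aff_dim Bs \<ge> 4"
    unfolding Bs_def
    by (rule aff_dim_ge4[where ia=5 and ib=4 and ic=1 and idd=2]) (simp_all add: words_avec)
  moreover have "aff_dim (perm_act \<sigma> ` Bs) = aff_dim Bs"
    using linear_perm_act inj_perm_act[OF assms(2)] by (rule aff_dim_injective_linear_image)
  moreover have "perm_act \<sigma> ` Bs \<subseteq> F"
  proof -
    have "perm_act \<sigma> (avec w) \<in> F" if "w \<in> Omega T" "c0 \<bullet> avec w = 0" for w
      using inP[OF that(1)] cval[OF that(1)] that(2) avec_map[OF assms(2), of w]
      unfolding F_def \<tau>_def by simp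
    then show ?thesis unfolding Bs_def using WO c0v by auto
  qed
  ultimately have affF: "aff_dim F \<ge> 4" using aff_dim_subset[of "perm_act \<sigma> ` Bs" F] by simp
  have lt: "aff_dim F < aff_dim P" using face_of_aff_dim_lt[OF cvx face FneP] .
  have ne: "F \<noteq> {}" using affF by auto
  have facet: "F facet_of P" unfolding facet_of_def using face ne affF affP lt by simp
  have eqF: "{x \<in> PT T. c \<bullet> x = 0} = F" unfolding F_def P_def by auto
  have "defines_facet c T"
    unfolding defines_facet_def using valid eqF facet P_def by simp
  then show ?thesis unfolding c_def c0_def T_def .
qed

end
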